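(* Let $0\le\alpha<1$ and let $f=h+\overline{g}\in\mathcal{P}^{0}_{\mathcal{H}}(\alpha)$ with $h(z)=z+\sum_{n=2}^\infty a_nz^n$, $g(z)=\sum_{n=2}^\infty b_nz^n$. Let $r_f$ be the unique root in $(0,1)$ of $$r+2(1-\alpha)\sum_{n=2}^{\infty}\frac{r^n}{n}=1+2(1-\alpha)\sum_{n=2}^{\infty}\frac{(-1)^{n-1}}{n}.$$ Then $$|z|+\sum_{n=2}^{\infty}(|a_n|+|b_n|)|z|^n\le d(f(0),\partial f(\mathbb{D}))\quad\text{for all } |z|\le r_f.$$ The radius $r_f$ is best possible: for $f_\alpha(z)=z+\sum_{n=2}^{\infty}\frac{2(1-\alpha)}{n}z^n\in\mathcal{P}^{0}_{\mathcal{H}}(\alpha)$, equality holds when $|z|=r_f$, and the inequality fails for every $|z|\in(r_f,1)$.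
   Context: $\mathbb{D}=\{z\in\mathbb{C}:|z|<1\}$. $\mathcal{H}_0$ denotes the class of harmonic functions $f=h+\overline{g}$ on $\mathbb{D}$, where $h,g$ are analytic in $\mathbb{D}$ of the form $h(z)=z+\sum_{n=2}^\infty a_nz^n$ and $g(z)=\sum_{n=2}^\infty b_nz^n$. For $0\le\alpha<1$, $\mathcal{P}^{0}_{\mathcal{H}}(\alpha)$ is the set of $f=h+\overline{g}\in\mathcal{H}_0$ such that $\operatorname{Re}(h'(z)-\alpha)>|g'(z)|$ for all $z\in\mathbb{D}$. For a function $f$ on $\mathbb{D}$, $d(f(0),\partial f(\mathbb{D}))=\inf\{|w-f(0)|: w\in\partial f(\mathbb{D})\}$ is the Euclidean distance from $f(0)$ to the boundary of $f(\mathbb{D})$. *)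

theory Defs
  imports "HOL-Analysis.Analysis"
begin

definition pser :: "(nat \<Rightarrow> complex) \<Rightarrow> complex \<Rightarrow> complex" where
  "pser c z = (\<Sum>n. c n * z ^ n)"

definition harm :: "(nat \<Rightarrow> complex) \<Rightarrow> (nat \<Rightarrow> complex) \<Rightarrow> complex \<Rightarrow> complex" where
  "harm a b z = pser a z + cnj (pser b z)"

definition H0 :: "(nat \<Rightarrow> complex) \<Rightarrow> (nat \<Rightarrow> complex) \<Rightarrow> bool" where
  "H0 a b \<longleftrightarrow> a 0 = 0 \<and> a 1 = 1 \<and> b 0 = 0 \<and> b 1 = 0 \<and>
     (\<forall>z \<in> ball 0 1. summable (\<lambda>n. a n * z ^ n) \<and> summable (\<lambda>n. b n * z ^ n))"

definition PH0 :: "real \<Rightarrow> (nat \<Rightarrow> complex) \<Rightarrow> (nat \<Rightarrow> complex) \<Rightarrow> bool" where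
  "PH0 \<alpha> a b \<longleftrightarrow> H0 a b \<and>
     (\<forall>z \<in> ball 0 1. Re (deriv (pser a) z - of_real \<alpha>) > norm (deriv (pser b) z))"

text \<open>Euclidean distance from f(0) to the boundary of f(D), as an extended real
  (infimum over the empty set is +infinity).\<close>
definition bdist :: "(complex \<Rightarrow> complex) \<Rightarrow> ereal" where
  "bdist f = (INF w \<in> frontier (f ` ball 0 1). ereal (norm (w - f 0)))"

definition rf_eq :: "real \<Rightarrow> real \<Rightarrow> bool" where
  "rf_eq \<alpha> r \<longleftrightarrow>
     r + 2 * (1 - \<alpha>) * (\<Sum>n. r ^ (n + 2) / real (n + 2))
       = 1 + 2 * (1 - \<alpha>) * (\<Sum>n. (-1) ^ (n + 1) / real (n + 2))"

definition rf :: "real \<Rightarrow> real" where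
  "rf \<alpha> = (THE r. 0 < r \<and> r < 1 \<and> rf_eq \<alpha> r)"

definition bohr_sum :: "(nat \<Rightarrow> complex) \<Rightarrow> (nat \<Rightarrow> complex) \<Rightarrow> real \<Rightarrow> real" where
  "bohr_sum a b \<rho> = \<rho> + (\<Sum>n. (norm (a (n + 2)) + norm (b (n + 2))) * \<rho> ^ (n + 2))"

definition fa_coeff :: "real \<Rightarrow> nat \<Rightarrow> complex" where
  "fa_coeff \<alpha> n = (if n = 0 then 0 else if n = 1 then 1 else of_real (2 * (1 - \<alpha>) / real n))"

end

theory Submission
  imports Defs "HOL-Complex_Analysis.Complex_Analysis" "HOL-Homology.Invariance_of_Domain"
    "HOL-Computational_Algebra.Fundamental_Theorem_Algebra"
begin


lemma S_sums:
  fixes r :: real assumes "\<bar>r\<bar> < 1"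
  shows "(\<lambda>n. r ^ (n + 2) / real (n + 2)) sums (- ln (1 - r) - r)"
proof -
  have "(\<lambda>n. - ((-(-r))^n) / of_nat n) sums ln (1 + (-r))"
    by (rule ln_series') (use assms in simp)
  hence "(\<lambda>n. r^n / real n) sums (- ln (1 - r))"
    using sums_minus by fastforce
  hence "(\<lambda>n. r^(n+2) / real (n+2)) sums (- ln (1 - r) - (\<Sum>i<2. r^i / real i))"
    by (subst sums_iff_shift) simp
  thus ?thesis by (simp add: numeral_2_eq_2)
qed

lemma S_neg_sums:
  fixes r :: real assumes "\<bar>r\<bar> < 1"
  shows "(\<lambda>n. (-r) ^ (n + 2) / real (n + 2)) sums (- ln (1 + r) + r)"
  using S_sums[of "-r"] assms by simp

lemma T_sums: "(\<lambda>n. (-1::real) ^ (n + 1) / real (n + 2)) sums (ln 2 - 1)"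
proof -
  have "(\<lambda>k. (-1::real)^k / real_of_nat (Suc k)) sums ln 2"
    by (rule alternating_harmonic_series_sums)
  hence "(\<lambda>i. (-1::real)^(i+1) / real_of_nat (Suc (i+1))) sums (ln 2 - (\<Sum>i<1. (-1::real)^i / real_of_nat (Suc i)))"
    by (subst sums_iff_shift) simp
  thus ?thesis by (simp add: add.commute)
qed

definition Lc :: "real \<Rightarrow> real" where "Lc \<alpha> = 2*\<alpha> - 1 + 2*(1-\<alpha>)*ln 2"
definition Bf :: "real \<Rightarrow> real \<Rightarrow> real" where "Bf \<alpha> r = r + 2*(1-\<alpha>)*(- ln (1 - r) - r)"
definition mf :: "real \<Rightarrow> real \<Rightarrow> real" where "mf \<alpha> r = (2*\<alpha>-1)*r + 2*(1-\<alpha>)*ln (1 + r)"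

lemma Lc_pos: "0 \<le> \<alpha> \<Longrightarrow> \<alpha> < 1 \<Longrightarrow> 0 < Lc \<alpha>"
proof -
  assume a: "0 \<le> \<alpha>" "\<alpha> < 1"
  have "2/3 \<le> ln (2::real)" by (rule ln2_ge_two_thirds)
  moreover have "ln (2::real) \<le> 1" using ln2_le_25_over_36 by simp
  ultimately have "(1-\<alpha>) * (1 - ln 2) \<le> 1 * (1/3)" using a by (intro mult_mono) auto
  moreover have "2*\<alpha> - 1 + 2*(1-\<alpha>)*ln 2 = 1 - 2*((1-\<alpha>)*(1-ln 2))" by (simp add: algebra_simps)
  ultimately show ?thesis unfolding Lc_def by linarith
qed

lemma Lc_lt1: "\<alpha> < 1 \<Longrightarrow> Lc \<alpha> < 1"
proof -
  assume a: "\<alpha> < 1"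
  have "ln (2::real) < 1" using ln2_le_25_over_36 by simp
  hence "0 < (1-\<alpha>) * (1 - ln 2)" using a by simp
  thus ?thesis unfolding Lc_def by (simp add: algebra_simps)
qed

lemma rf_eq_iff: "0 \<le> r \<Longrightarrow> r < 1 \<Longrightarrow> rf_eq \<alpha> r \<longleftrightarrow> Bf \<alpha> r = Lc \<alpha>"
  unfolding rf_eq_def Bf_def Lc_def
  using sums_unique[OF S_sums[of r]] sums_unique[OF T_sums]
  by (auto simp: algebra_simps)

lemma Bf_series: "0 \<le> r \<Longrightarrow> r < 1 \<Longrightarrow> Bf \<alpha> r = r + 2*(1-\<alpha>)*(suminf (\<lambda>n. r ^ (n + 2) / real (n + 2)))"
  unfolding Bf_def using sums_unique[OF S_sums[of r]] by auto

lemma Bf_strict_mono: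
  assumes "\<alpha> < 1" "0 \<le> r" "r < s" "s < 1" shows "Bf \<alpha> r < Bf \<alpha> s"
proof -
  have "(suminf (\<lambda>n. r ^ (n + 2) / real (n + 2))) \<le> (suminf (\<lambda>n. s ^ (n + 2) / real (n + 2)))"
  proof (rule suminf_le)
    show "summable (\<lambda>n. r ^ (n + 2) / real (n + 2))" by (rule sums_summable[OF S_sums]) (use assms in auto)
    show "summable (\<lambda>n. s ^ (n + 2) / real (n + 2))" by (rule sums_summable[OF S_sums]) (use assms in auto)
    fix n show "r ^ (n + 2) / real (n + 2) \<le> s ^ (n + 2) / real (n + 2)"
      using assms by (intro divide_right_mono power_mono) auto
  qed
  hence "2*(1-\<alpha>)*(suminf (\<lambda>n. r ^ (n + 2) / real (n + 2))) \<le> 2*(1-\<alpha>)*(suminf (\<lambda>n. s ^ (n + 2) / real (n + 2)))"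
    using assms by (intro mult_left_mono) auto
  thus ?thesis using Bf_series[of r \<alpha>] Bf_series[of s \<alpha>] assms by linarith
qed

lemma Bf_ge: assumes "\<alpha> < 1" "0 \<le> r" "r < 1" shows "r \<le> Bf \<alpha> r"
proof -
  have "0 \<le> (suminf (\<lambda>n. r ^ (n + 2) / real (n + 2)))"
    by (rule suminf_nonneg) (use assms sums_summable[OF S_sums] in auto)
  thus ?thesis using Bf_series[of r \<alpha>] assms by auto
qed

lemma Bf_cont: "continuous_on {0..<1} (Bf \<alpha>)"
  unfolding Bf_def by (intro continuous_intros) auto

lemma root_ex1:
  assumes "0 \<le> \<alpha>" "\<alpha> < 1"
  shows "\<exists>!r. 0 < r \<and> r < 1 \<and> rf_eq \<alpha> r"
proof -
  define s where "s = (1 + Lc \<alpha>)/2"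
  have s: "0 < s" "s < 1" "Lc \<alpha> < s" using Lc_pos[OF assms] Lc_lt1[OF assms(2)] by (auto simp: s_def)
  have "Lc \<alpha> < Bf \<alpha> s" using Bf_ge[of \<alpha> s] s assms by auto
  moreover have "Bf \<alpha> 0 = 0" by (simp add: Bf_def)
  moreover have "continuous_on {0..s} (Bf \<alpha>)" using Bf_cont by (rule continuous_on_subset) (use s in auto)
  ultimately obtain r where r: "0 \<le> r" "r \<le> s" "Bf \<alpha> r = Lc \<alpha>"
    using IVT'[of "Bf \<alpha>" 0 "Lc \<alpha>" s] Lc_pos[OF assms] s by auto
  have r0: "r \<noteq> 0" using r Lc_pos[OF assms] by (auto simp: Bf_def)
  show ?thesis
  proof (rule ex1I[of _ r])
    show "0 < r \<and> r < 1 \<and> rf_eq \<alpha> r" using r r0 s rf_eq_iff by auto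
  next
    fix y assume y: "0 < y \<and> y < 1 \<and> rf_eq \<alpha> y"
    hence "Bf \<alpha> y = Lc \<alpha>" using rf_eq_iff by auto
    thus "y = r" using Bf_strict_mono[of \<alpha> r y] Bf_strict_mono[of \<alpha> y r] r y s assms
      by (cases "r < y"; cases "y < r") auto
  qed
qed

lemma rf_props:
  assumes "0 \<le> \<alpha>" "\<alpha> < 1"
  shows "0 < rf \<alpha>" "rf \<alpha> < 1" "Bf \<alpha> (rf \<alpha>) = Lc \<alpha>"
proof -
  have "0 < rf \<alpha> \<and> rf \<alpha> < 1 \<and> rf_eq \<alpha> (rf \<alpha>)"
    unfolding rf_def by (rule theI') (rule root_ex1[OF assms])
  thus "0 < rf \<alpha>" "rf \<alpha> < 1" "Bf \<alpha> (rf \<alpha>) = Lc \<alpha>" using rf_eq_iff by auto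
qed



lemma powser_summable_ball:
  assumes "\<forall>z\<in>ball 0 1. (\<lambda>n. c n * z^n) sums F z"
  shows "\<And>z::complex. norm z < 1 \<Longrightarrow> summable (\<lambda>n. c n * z^n)"
proof -
  fix z :: complex assume "norm z < 1"
  hence "z \<in> ball 0 1" by simp
  hence "(\<lambda>n. c n * z^n) sums F z" using assms by blast
  thus "summable (\<lambda>n. c n * z^n)" by (rule sums_summable)
qed

lemma powser_deriv:
  assumes S: "\<forall>z\<in>ball 0 1. (\<lambda>n. c n * z^n) sums F z" and z: "z \<in> ball (0::complex) 1"
  shows "(F has_field_derivative (suminf (\<lambda>n. diffs c n * z^n))) (at z)"
proof (rule has_field_derivative_transform_within_open)
  have nz: "norm z < 1" using z by simp
  show "((\<lambda>z. suminf (\<lambda>n. c n * z^n)) has_field_derivative (suminf (\<lambda>n. diffs c n * z^n))) (at z)"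
    by (rule termdiffs_strong'[where K=1, OF powser_summable_ball[OF S] nz])
  show "open (ball (0::complex) 1)" by simp
  show "z \<in> ball 0 1" by fact
  show "suminf (\<lambda>n. c n * x^n) = F x" if "x \<in> ball 0 1" for x
    using S that by (simp add: sums_iff)
qed

lemma powser_hol:
  assumes S: "\<forall>z\<in>ball 0 1. (\<lambda>n. c n * z^n) sums F z"
  shows "F holomorphic_on ball 0 1"
  unfolding holomorphic_on_open[OF open_ball] using powser_deriv[OF S] by blast

lemma powser_diffs_sums:
  assumes S: "\<forall>z\<in>ball 0 1. (\<lambda>n. c n * z^n) sums F z" and z: "z \<in> ball (0::complex) 1"
  shows "(\<lambda>n. diffs c n * z^n) sums (deriv F z)"
proof -
  have nz: "norm z < 1" using z by simp
  have "summable (\<lambda>n. diffs c n * z^n)"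
    by (rule termdiff_converges[where K=1, OF nz powser_summable_ball[OF S]])
  moreover have "deriv F z = suminf (\<lambda>n. diffs c n * z^n)" by (rule DERIV_imp_deriv[OF powser_deriv[OF S z]])
  ultimately show ?thesis by (simp add: summable_sums)
qed

lemma norm_w_lt:
  fixes x :: complex assumes "0 < Re x" shows "norm (x - 1) < norm (x + 1)"
proof -
  have e1: "(norm (x-1))^2 = (Re x - 1)^2 + (Im x)^2" by (simp add: cmod_power2)
  have e2: "(norm (x+1))^2 = (Re x + 1)^2 + (Im x)^2" by (simp add: cmod_power2)
  have "(Re x - 1)^2 < (Re x + 1)^2" using assms by (simp add: power2_eq_square algebra_simps)
  hence "(norm (x-1))^2 < (norm(x+1))^2" using e1 e2 by simp
  thus ?thesis by (rule power_less_imp_less_base) simp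
qed

lemma re_cayley:
  fixes w :: complex assumes "norm w < 1"
  shows "(1 - norm w)/(1 + norm w) \<le> Re ((1 + w)/(1 - w))"
proof -
  have ne: "1 - w \<noteq> 0" using assms by auto
  have "Re ((1 + w)/(1 - w)) = ((1 + Re w) * (1 - Re w) + Im w * (- Im w)) / (norm (1 - w))^2"
    by (simp add: Re_divide')
  also have "(1 + Re w) * (1 - Re w) + Im w * (- Im w) = 1 - (norm w)^2"
    unfolding cmod_power2 by (simp add: power2_eq_square algebra_simps)
  finally have eq: "Re ((1 + w)/(1 - w)) = (1 - (norm w)^2) / (norm (1 - w))^2" .
  have "norm (1 - w) \<le> 1 + norm w" using norm_triangle_ineq4[of 1 w] by simp
  hence le: "(norm (1 - w))^2 \<le> (1 + norm w)^2" by (intro power_mono) auto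
  have pos: "0 < (norm (1 - w))^2" using ne by simp
  have nn: "0 \<le> 1 - (norm w)^2" using assms by (simp add: abs_square_le_1 less_imp_le)
  have "(1 - (norm w)^2) / (1 + norm w)^2 \<le> (1 - (norm w)^2) / (norm (1 - w))^2"
  proof (rule divide_left_mono[OF le nn])
    have "0 < (1 + norm w)^2" by (metis add_pos_nonneg norm_ge_zero zero_less_one zero_less_power)
    thus "0 < (1 + norm w)^2 * (norm (1 - w))^2" using pos by simp
  qed
  moreover have "(1 - (norm w)^2) / (1 + norm w)^2 = (1 - norm w)/(1 + norm w)"
  proof -
    have "1 - (norm w)^2 = (1 - norm w) * (1 + norm w)" by (simp add: power2_eq_square algebra_simps)
    moreover have "(1 + norm w)^2 = (1 + norm w) * (1 + norm w)" by (simp add: power2_eq_square)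
    moreover have "1 + norm w \<noteq> 0" by (metis add_pos_nonneg norm_ge_zero zero_less_one less_irrefl)
    ultimately show ?thesis by simp
  qed
  ultimately show ?thesis using eq by simp
qed

lemma cayley_setup:
  assumes hol: "P holomorphic_on ball 0 1" and pos: "\<forall>z\<in>ball 0 1. 0 < Re (P z)"
    and P0: "P 0 = 1" and w_def: "w = (\<lambda>z. (P z - 1)/(P z + 1))"
  shows "w holomorphic_on ball 0 1" "w 0 = 0" "\<And>x. norm x < 1 \<Longrightarrow> norm (w x) < 1"
    "\<And>x. x \<in> ball 0 1 \<Longrightarrow> P x + 1 \<noteq> 0"
proof -
  show ne: "P x + 1 \<noteq> 0" if "x \<in> ball 0 1" for x
  proof
    assume "P x + 1 = 0"
    hence "P x = -1" by (simp add: eq_neg_iff_add_eq_0)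
    hence "Re (P x) = -1" by simp
    thus False using pos that by force
  qed
  show "w holomorphic_on ball 0 1" unfolding w_def using hol ne by (intro holomorphic_intros) auto
  show "w 0 = 0" by (simp add: w_def P0)
  show "norm (w x) < 1" if "norm x < 1" for x
  proof -
    have x: "x \<in> ball 0 1" using that by simp
    have "0 < Re (P x)" using pos x by blast
    hence lt: "norm (P x - 1) < norm (P x + 1)" by (rule norm_w_lt)
    have "0 < norm (P x + 1)" using ne[OF x] by simp
    thus ?thesis unfolding w_def using lt by (simp add: norm_divide)
  qed
qed

lemma cara_re:
  assumes hol: "P holomorphic_on ball 0 1" and pos: "\<forall>z\<in>ball 0 1. 0 < Re (P z)"
    and P0: "P 0 = 1" and z: "norm z < 1"
  shows "(1 - norm z)/(1 + norm z) \<le> Re (P z)"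
proof -
  define w where "w = (\<lambda>z. (P z - 1)/(P z + 1))"
  note cs = cayley_setup[OF hol pos P0 w_def]
  have wle: "norm (w z) \<le> norm z" by (rule Schwarz_Lemma(1)[OF cs(1) cs(2) cs(3) z])
  have n: "P z + 1 \<noteq> 0" using cs(4) z by simp
  have Pz: "P z = (1 + w z)/(1 - w z)"
  proof -
    have a: "1 - w z = 2/(P z + 1)" unfolding w_def using n by (simp add: field_simps)
    have b: "1 + w z = 2 * P z/(P z + 1)" unfolding w_def using n by (simp add: field_simps)
    show ?thesis unfolding a b using n by simp
  qed
  have "(1 - norm (w z))/(1 + norm (w z)) \<le> Re (P z)" using re_cayley[OF cs(3)[OF z]] Pz by simp
  moreover have "(1 - norm z)/(1 + norm z) \<le> (1 - norm (w z))/(1 + norm (w z))"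
  proof -
    have mono: "(1 - b)/(1 + b) \<le> (1 - a)/(1 + a)" if "0 \<le> a" "a \<le> b" for a b :: real
    proof -
      have "(1 - b)/(1 + b) = 2/(1+b) - 1" using that by (simp add: field_simps)
      moreover have "(1 - a)/(1 + a) = 2/(1+a) - 1" using that by (simp add: field_simps)
      moreover have "2/(1+b) \<le> 2/(1+a)" using that by (intro divide_left_mono) auto
      ultimately show ?thesis by simp
    qed
    show ?thesis by (rule mono[OF norm_ge_zero wle])
  qed
  ultimately show ?thesis by linarith
qed

lemma cara_deriv:
  assumes hol: "P holomorphic_on ball 0 1" and pos: "\<forall>z\<in>ball 0 1. 0 < Re (P z)"
    and P0: "P 0 = 1"
  shows "norm (deriv P 0) \<le> 2"
proof -
  define w where "w = (\<lambda>z. (P z - 1)/(P z + 1))"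
  note cs = cayley_setup[OF hol pos P0 w_def]
  have dw: "norm (deriv w 0) \<le> 1" using Schwarz_Lemma(2)[OF cs(1) cs(2) cs(3), of 0] by simp
  have dP: "(P has_field_derivative deriv P 0) (at 0)" by (rule holomorphic_derivI[OF hol]) auto
  have "(w has_field_derivative ((deriv P 0 * (P 0 + 1) - (P 0 - 1) * deriv P 0) / ((P 0 + 1) * (P 0 + 1)))) (at 0)"
    unfolding w_def by (rule DERIV_divide[OF DERIV_diff[OF dP DERIV_const] DERIV_add[OF dP DERIV_const], simplified]) (simp add: P0)
  hence "(w has_field_derivative (deriv P 0 / 2)) (at 0)" by (simp add: P0)
  hence "deriv w 0 = deriv P 0 / 2" by (rule DERIV_imp_deriv)
  hence "deriv P 0 = 2 * deriv w 0" by (simp add: mult.commute)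
  hence "norm (deriv P 0) = 2 * norm (deriv w 0)" by (simp add: norm_mult)
  thus ?thesis using dw by simp
qed



lemma rootsum:
  assumes k: "0 < k"
  defines "\<omega> \<equiv> cis (2 * pi / real k)"
  shows "(\<Sum>j<k. (\<omega>^m)^j) = (if k dvd m then of_nat k else 0)"
proof -
  have wm: "\<omega>^m = cis (2 * pi * real m / real k)" unfolding \<omega>_def by (subst Complex.DeMoivre, rule arg_cong[where f=cis]) simp
  have wmk: "(\<omega>^m)^k = 1"
  proof -
    have "(\<omega>^m)^k = cis (real k * (2 * pi * real m / real k))" unfolding wm by (rule Complex.DeMoivre)
    also have "real k * (2 * pi * real m / real k) = 2 * pi * real m" using k by simp
    also have "cis (2 * pi * real m) = 1" using cis_multiple_2pi[of "real m"] by simp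
    finally show ?thesis .
  qed
  show ?thesis
  proof (cases "\<omega>^m = 1")
    case True
    have "k dvd m"
    proof -
      have "cos (2 * pi * real m / real k) = 1" using True unfolding wm by (simp add: complex_eq_iff)
      then obtain t :: int where t: "2 * pi * real m / real k = 2 * pi * of_int t" by (auto simp: cos_one_2pi_int)
      hence "real m = real k * of_int t" using k by (simp add: field_simps)
      hence "int m = int k * t" by (metis of_int_eq_iff of_int_mult of_int_of_nat_eq)
      hence "int k dvd int m" by simp
      thus ?thesis by simp
    qed
    thus ?thesis using True by simp
  next
    case False
    have "\<not> k dvd m"
    proof
      assume "k dvd m" then obtain q where "m = k * q" by blast
      hence "\<omega>^m = ((\<omega>^k)^q)" by (simp add: power_mult)
      moreover have "\<omega>^k = 1" unfolding \<omega>_def using k by (subst Complex.DeMoivre) (simp add: complex_eq_iff)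
      ultimately show False using False by simp
    qed
    moreover have "(\<Sum>j<k. (\<omega>^m)^j) = 0" using False wmk by (subst geometric_sum) auto
    ultimately show ?thesis by simp
  qed
qed

lemma cara_coeff:
  assumes S: "\<forall>z\<in>ball 0 1. (\<lambda>m. c m * z^m) sums P z" and pos: "\<forall>z\<in>ball 0 1. 0 < Re (P z)"
    and c0: "c 0 = 1" and k: "1 \<le> k"
  shows "norm (c k) \<le> 2"
proof -
  have k0: "0 < k" using k by simp
  define \<omega> where "\<omega> = cis (2 * pi / real k)"
  have n\<omega>: "norm (\<omega>^j) = 1" for j unfolding \<omega>_def by (simp add: norm_power)
  define g where "g = (\<lambda>z m. if k dvd m then c m * z^m else (0::complex))"
  have avg: "g z sums ((1/of_nat k) * (\<Sum>j<k. P (\<omega>^j * z)))" if z: "norm z < 1" for z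
  proof -
    have "(\<lambda>m. \<Sum>j<k. c m * (\<omega>^j * z)^m) sums (\<Sum>j<k. P (\<omega>^j * z))"
    proof (rule sums_sum)
      fix j assume "j \<in> {..<k}"
      have "\<omega>^j * z \<in> ball 0 1" using z n\<omega>[of j] by (simp add: norm_mult)
      thus "(\<lambda>m. c m * (\<omega>^j * z)^m) sums P (\<omega>^j * z)" using S by blast
    qed
    moreover have "(\<Sum>j<k. c m * (\<omega>^j * z)^m) = of_nat k * g z m" for m
    proof -
      have e: "(\<omega>^j * z)^m = c' * (\<omega>^m)^j" if "c' = z^m" for j c'
      proof -
        have "(\<omega>^j)^m = (\<omega>^m)^j" by (simp add: power_mult[symmetric] mult.commute)
        thus ?thesis using that by (simp add: power_mult_distrib mult.commute)
      qed
      have "(\<Sum>j<k. c m * (\<omega>^j * z)^m) = (\<Sum>j<k. c m * z^m * (\<omega>^m)^j)"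
        by (rule sum.cong[OF refl]) (simp add: e[OF refl] mult.assoc)
      also have "\<dots> = c m * z^m * (\<Sum>j<k. (\<omega>^m)^j)" by (simp add: sum_distrib_left)
      also have "\<dots> = of_nat k * g z m" unfolding \<omega>_def rootsum[OF k0] g_def by simp
      finally show ?thesis .
    qed
    ultimately have "(\<lambda>m. of_nat k * g z m) sums (\<Sum>j<k. P (\<omega>^j * z))" by simp
    hence "(\<lambda>m. (1/of_nat k) * (of_nat k * g z m)) sums ((1/of_nat k) * (\<Sum>j<k. P (\<omega>^j * z)))"
      by (rule sums_mult)
    thus ?thesis using k0 by simp
  qed
  define Q where "Q = (\<lambda>\<zeta>. suminf (\<lambda>i. c (i*k) * \<zeta>^i))"
  have Qs: "(\<lambda>i. c (i*k) * \<zeta>^i) sums Q \<zeta> \<and> 0 < Re (Q \<zeta>)" if "\<zeta> \<in> ball 0 1" for \<zeta>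
  proof -
    obtain z where zk: "z^k = \<zeta>" using nth_root_exists[OF k0, of \<zeta>] by blast
    have nz: "norm z < 1"
    proof (rule ccontr)
      assume "\<not> norm z < 1"
      hence "1 \<le> norm z ^ k" by (simp add: one_le_power)
      moreover have "norm z ^ k = norm \<zeta>" unfolding zk[symmetric] by (rule norm_power[symmetric])
      ultimately show False using that by simp
    qed
    have sm: "strict_mono (\<lambda>i::nat. i * k)" using k0 by (intro strict_monoI) simp
    have zero: "g z n = 0" if "n \<notin> range (\<lambda>i. i * k)" for n
    proof -
      have "\<not> k dvd n"
      proof
        assume "k dvd n" hence "n = (n div k) * k" by simp
        thus False using that by blast
      qed
      thus ?thesis by (simp add: g_def)
    qed
    have "(\<lambda>i. g z (i*k)) sums ((1/of_nat k) * (\<Sum>j<k. P (\<omega>^j * z)))"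
      using sums_mono_reindex[of "\<lambda>i. i*k" "g z", OF sm zero] avg[OF nz] by blast
    moreover have "g z (i*k) = c (i*k) * \<zeta>^i" for i
      unfolding g_def zk[symmetric] by (simp add: power_mult[symmetric] mult.commute)
    ultimately have A: "(\<lambda>i. c (i*k) * \<zeta>^i) sums ((1/of_nat k) * (\<Sum>j<k. P (\<omega>^j * z)))" by simp
    hence QA: "Q \<zeta> = (1/of_nat k) * (\<Sum>j<k. P (\<omega>^j * z))" unfolding Q_def by (simp add: sums_iff)
    have "0 < (\<Sum>j<k. Re (P (\<omega>^j * z)))"
    proof (rule sum_pos)
      show "finite {..<k}" by simp
      show "{..<k} \<noteq> {}" using k0 by auto
      fix j assume "j \<in> {..<k}"
      have "\<omega>^j * z \<in> ball 0 1" using nz n\<omega>[of j] by (simp add: norm_mult)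
      thus "0 < Re (P (\<omega>^j * z))" using pos by blast
    qed
    moreover have "Re (Q \<zeta>) = (1/real k) * (\<Sum>j<k. Re (P (\<omega>^j * z)))"
      unfolding QA by (simp add: Re_sum)
    ultimately have "0 < Re (Q \<zeta>)" using k0 by simp
    thus ?thesis using A QA by simp
  qed
  have QS: "\<forall>z\<in>ball 0 1. (\<lambda>i. c (i*k) * z^i) sums Q z" using Qs by blast
  have holQ: "Q holomorphic_on ball 0 1" by (rule powser_hol[OF QS])
  have Q0: "Q 0 = 1" unfolding Q_def using c0 by simp
  have "(\<lambda>n. diffs (\<lambda>i. c (i*k)) n * 0^n) sums (deriv Q 0)" by (rule powser_diffs_sums[OF QS]) simp
  hence "deriv Q 0 = diffs (\<lambda>i. c (i*k)) 0" by (simp add: sums_iff)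
  hence dQ: "deriv Q 0 = c k" by (simp add: diffs_def)
  have "norm (deriv Q 0) \<le> 2" by (rule cara_deriv[OF holQ _ Q0]) (use Qs in blast)
  thus ?thesis using dQ by simp
qed



lemma PH0_facts:
  assumes "PH0 \<alpha> a b"
  shows "\<forall>z\<in>ball 0 1. (\<lambda>n. a n * z^n) sums pser a z"
    "\<forall>z\<in>ball 0 1. (\<lambda>n. b n * z^n) sums pser b z"
    "a 0 = 0" "a 1 = 1" "b 0 = 0" "b 1 = 0"
    "\<forall>z\<in>ball 0 1. Re (deriv (pser a) z - of_real \<alpha>) > norm (deriv (pser b) z)"
  using assms unfolding PH0_def H0_def pser_def by (auto simp: summable_sums)

lemma diffs_sums_ab:
  assumes "PH0 \<alpha> a b" "z \<in> ball 0 1"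
  shows "(\<lambda>n. diffs a n * z^n) sums deriv (pser a) z" "(\<lambda>n. diffs b n * z^n) sums deriv (pser b) z"
  using powser_diffs_sums[OF PH0_facts(1)[OF assms(1)] assms(2)]
    powser_diffs_sums[OF PH0_facts(2)[OF assms(1)] assms(2)] by auto

lemma Peps:
  assumes ph: "PH0 \<alpha> a b" and al: "\<alpha> < 1" and e: "norm \<epsilon> = 1"
    and P_def: "P = (\<lambda>z. (deriv (pser a) z + \<epsilon> * deriv (pser b) z - of_real \<alpha>) / of_real (1 - \<alpha>))"
    and cc_def: "cc = (\<lambda>m. (diffs a m + \<epsilon> * diffs b m - (if m = 0 then of_real \<alpha> else 0)) / of_real (1 - \<alpha>))"
  shows "\<forall>z\<in>ball 0 1. (\<lambda>m. cc m * z^m) sums P z"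
    "\<forall>z\<in>ball 0 1. 0 < Re (P z)" "cc 0 = 1" "P holomorphic_on ball 0 1"
proof -
  show S: "\<forall>z\<in>ball 0 1. (\<lambda>m. cc m * z^m) sums P z"
  proof
    fix z :: complex assume z: "z \<in> ball 0 1"
    have s0: "(\<lambda>m. (if m = 0 then of_real \<alpha> else 0) * z^m) sums (of_real \<alpha>)"
    proof -
      have "(\<lambda>m. (if m = 0 then of_real \<alpha> else 0) * z^m) = (\<lambda>m. if m = 0 then (of_real \<alpha> :: complex) else 0)"
        by auto
      thus ?thesis using sums_single[of 0 "\<lambda>_. of_real \<alpha> :: complex"] by simp
    qed
    have "(\<lambda>m. (diffs a m * z^m + \<epsilon> * (diffs b m * z^m) - (if m = 0 then of_real \<alpha> else 0) * z^m) / of_real (1 - \<alpha>))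
          sums P z"
      unfolding P_def
      by (intro sums_divide sums_diff sums_add sums_mult diffs_sums_ab[OF ph z] s0)
    moreover have "(diffs a m * z^m + \<epsilon> * (diffs b m * z^m) - (if m = 0 then of_real \<alpha> else 0) * z^m) / of_real (1 - \<alpha>)
          = cc m * z^m" for m
      unfolding cc_def by (simp add: algebra_simps add_divide_distrib diff_divide_distrib)
    ultimately show "(\<lambda>m. cc m * z^m) sums P z" by simp
  qed
  show "\<forall>z\<in>ball 0 1. 0 < Re (P z)"
  proof
    fix z :: complex assume z: "z \<in> ball 0 1"
    have g: "norm (deriv (pser b) z) < Re (deriv (pser a) z - of_real \<alpha>)" using PH0_facts(7)[OF ph] z by blast
    have "- norm (deriv (pser b) z) \<le> Re (\<epsilon> * deriv (pser b) z)"
    proof -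
      have "\<bar>Re (\<epsilon> * deriv (pser b) z)\<bar> \<le> norm (\<epsilon> * deriv (pser b) z)" by (rule abs_Re_le_cmod)
      also have "\<dots> = norm (deriv (pser b) z)" using e by (simp add: norm_mult)
      finally show ?thesis by linarith
    qed
    hence "0 < Re (deriv (pser a) z + \<epsilon> * deriv (pser b) z - of_real \<alpha>)" using g by simp
    moreover have "Re (P z) = Re (deriv (pser a) z + \<epsilon> * deriv (pser b) z - of_real \<alpha>) / (1 - \<alpha>)"
      unfolding P_def by (simp add: Re_divide_of_real)
    ultimately show "0 < Re (P z)" using al by simp
  qed
  show "cc 0 = 1" unfolding cc_def using PH0_facts(4,6)[OF ph] al by (simp add: diffs_def)
  show "P holomorphic_on ball 0 1" by (rule powser_hol[OF S])
qed

lemma coef_bound: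
  assumes ph: "PH0 \<alpha> a b" and al: "\<alpha> < 1" and n: "2 \<le> n"
  shows "norm (a n) + norm (b n) \<le> 2 * (1 - \<alpha>) / real n"
proof -
  define \<epsilon> where "\<epsilon> = (if a n = 0 \<or> b n = 0 then 1 else sgn (a n) * cnj (sgn (b n)))"
  have e: "norm \<epsilon> = 1" unfolding \<epsilon>_def by (auto simp: norm_mult norm_sgn)
  have eq: "norm (a n + \<epsilon> * b n) = norm (a n) + norm (b n)"
  proof (cases "a n = 0 \<or> b n = 0")
    case True thus ?thesis unfolding \<epsilon>_def by auto
  next
    case False
    have "cnj (sgn (b n)) * b n = of_real (norm (b n))"
    proof -
      define B where "B = b n"
      have B0: "B \<noteq> 0" using False B_def by simp
      have sB: "sgn B = B / of_real (norm B)" by (simp add: sgn_div_norm scaleR_conv_of_real divide_inverse mult.commute)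
      have "cnj (sgn B) * B = (cnj B * B) / of_real (norm B)" unfolding sB by simp
      also have "cnj B * B = of_real ((norm B)^2)" by (subst complex_norm_square) (rule mult.commute)
      also have "of_real ((norm B)^2) / of_real (norm B) = (of_real (norm B) :: complex)"
        using B0 by (simp add: power2_eq_square)
      finally show ?thesis unfolding B_def .
    qed
    hence "\<epsilon> * b n = sgn (a n) * of_real (norm (b n))"
      using False unfolding \<epsilon>_def by (simp add: mult.assoc)
    moreover have "a n = sgn (a n) * of_real (norm (a n))"
      by (cases "a n = 0") (simp_all add: sgn_div_norm scaleR_conv_of_real)
    ultimately have "a n + \<epsilon> * b n = sgn (a n) * of_real (norm (a n) + norm (b n))"
      by (metis distrib_left of_real_add)
    thus ?thesis using False by (simp only: norm_mult norm_of_real) (simp add: norm_sgn)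
  qed
  define cc where "cc = (\<lambda>m. (diffs a m + \<epsilon> * diffs b m - (if m = 0 then of_real \<alpha> else 0)) / of_real (1 - \<alpha>))"
  define P where "P = (\<lambda>z. (deriv (pser a) z + \<epsilon> * deriv (pser b) z - of_real \<alpha>) / of_real (1 - \<alpha>))"
  note pe = Peps[OF ph al e P_def cc_def]
  have "norm (cc (n - 1)) \<le> 2" by (rule cara_coeff[OF pe(1) pe(2) pe(3)]) (use n in simp)
  moreover have "cc (n - 1) = of_nat n * (a n + \<epsilon> * b n) / of_real (1 - \<alpha>)"
    using n unfolding cc_def diffs_def by (simp add: algebra_simps)
  moreover have "norm (of_real (1 - \<alpha>) :: complex) = 1 - \<alpha>" using al by (simp only: norm_of_real)
  ultimately have "real n * norm (a n + \<epsilon> * b n) / (1 - \<alpha>) \<le> 2"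
    by (simp only: norm_mult norm_divide norm_of_nat)
  hence "real n * norm (a n + \<epsilon> * b n) \<le> 2 * (1 - \<alpha>)" using al by (simp add: divide_simps)
  thus ?thesis using n eq by (simp add: divide_simps mult.commute)
qed

lemma deriv_lower:
  assumes ph: "PH0 \<alpha> a b" and al: "\<alpha> < 1" and z: "norm z < 1"
  shows "\<alpha> + (1 - \<alpha>) * ((1 - norm z)/(1 + norm z)) \<le> Re (deriv (pser a) z) - norm (deriv (pser b) z)"
proof -
  define G where "G = deriv (pser b) z"
  define \<epsilon> where "\<epsilon> = (if G = 0 then 1 else - (cnj G / of_real (norm G)))"
  have e: "norm \<epsilon> = 1" unfolding \<epsilon>_def by (auto simp: norm_divide)
  have eG: "\<epsilon> * G = - of_real (norm G)"
  proof (cases "G = 0")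
    case False
    have "cnj G * G = of_real ((norm G)^2)" by (subst complex_norm_square) (rule mult.commute)
    thus ?thesis using False unfolding \<epsilon>_def by (simp add: power2_eq_square divide_simps)
  qed (simp add: \<epsilon>_def)
  define P where "P = (\<lambda>z. (deriv (pser a) z + \<epsilon> * deriv (pser b) z - of_real \<alpha>) / of_real (1 - \<alpha>))"
  define cc where "cc = (\<lambda>m. (diffs a m + \<epsilon> * diffs b m - (if m = 0 then of_real \<alpha> else 0)) / of_real (1 - \<alpha>))"
  note pe = Peps[OF ph al e P_def cc_def]
  have P0: "P 0 = 1"
  proof -
    have "(0::complex) \<in> ball 0 1" by simp
    hence "(\<lambda>m. cc m * 0^m) sums P 0" using pe(1) by blast
    hence "P 0 = suminf (\<lambda>m. cc m * 0^m)" by (simp add: sums_iff)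
    hence "P 0 = cc 0" by (simp only: powser_zero)
    thus ?thesis using pe(3) by simp
  qed
  have "(1 - norm z)/(1 + norm z) \<le> Re (P z)" by (rule cara_re[OF pe(4) pe(2) P0 z])
  also have "Re (P z) = (Re (deriv (pser a) z) - norm G - \<alpha>) / (1 - \<alpha>)"
    unfolding P_def G_def[symmetric] using eG by (simp add: Re_divide_of_real)
  finally have "(1 - \<alpha>) * ((1 - norm z)/(1 + norm z)) \<le> Re (deriv (pser a) z) - norm G - \<alpha>"
    using al by (simp add: divide_simps mult.commute)
  thus ?thesis unfolding G_def by simp
qed



lemma seg_deriv:
  fixes h g :: "complex \<Rightarrow> complex"
  assumes dh: "(h has_field_derivative h') (at (z1 + of_real t * u))"
    and dg: "(g has_field_derivative g') (at (z1 + of_real t * u))"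
  shows "((\<lambda>s. Re (cnj u * (h (z1 + of_real s * u) + cnj (g (z1 + of_real s * u)))))
           has_real_derivative Re (cnj u * (u * h' + cnj (u * g')))) (at t)"
proof -
  have \<gamma>: "((\<lambda>s. z1 + of_real s * u) has_vector_derivative u) (at t)"
    by (auto intro!: derivative_eq_intros)
  have hg: "((\<lambda>s. h (z1 + of_real s * u)) has_vector_derivative (u * h')) (at t)"
    using field_vector_diff_chain_at[OF \<gamma> dh] by (simp add: o_def)
  have gg: "((\<lambda>s. g (z1 + of_real s * u)) has_vector_derivative (u * g')) (at t)"
    using field_vector_diff_chain_at[OF \<gamma> dg] by (simp add: o_def)
  have "((\<lambda>s. cnj u * (h (z1 + of_real s * u) + cnj (g (z1 + of_real s * u))))
           has_vector_derivative (cnj u * (u * h' + cnj (u * g')))) (at t)"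
    by (intro has_vector_derivative_mult_right has_vector_derivative_add hg has_vector_derivative_cnj gg)
  thus ?thesis by (rule has_field_derivative_Re)
qed

lemma seg_ineq:
  fixes u h' g' :: complex
  shows "(norm u)^2 * (Re h' - norm g') \<le> Re (cnj u * (u * h' + cnj (u * g')))"
proof -
  have e1: "cnj u * (u * h') = of_real ((norm u)^2) * h'" by (subst complex_norm_square) (simp add: algebra_simps)
  have e2: "cnj u * cnj (u * g') = cnj (u * u * g')" by simp
  have "\<bar>Re (u * u * g')\<bar> \<le> norm (u * u * g')" by (rule abs_Re_le_cmod)
  also have "\<dots> = (norm u)^2 * norm g'" by (simp add: norm_mult power2_eq_square)
  finally have A: "\<bar>Re (u * u * g')\<bar> \<le> (norm u)^2 * norm g'" .
  have "Re (cnj u * cnj (u * g')) = Re (u * u * g')" by (simp only: e2 cnj.sel(1))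
  hence "- ((norm u)^2 * norm g') \<le> Re (cnj u * cnj (u * g'))" using A by linarith
  moreover have "Re (cnj u * (u * h')) = (norm u)^2 * Re h'" unfolding e1 by simp
  ultimately show ?thesis by (simp add: distrib_left algebra_simps)
qed

lemma pser_0: "pser c 0 = c 0" unfolding pser_def by (rule powser_zero)

lemma harm_0: assumes "PH0 \<alpha> a b" shows "harm a b 0 = 0"
  unfolding harm_def pser_0 using PH0_facts(3,5)[OF assms] by simp

lemma pser_hol_ab:
  assumes "PH0 \<alpha> a b" shows "pser a holomorphic_on ball 0 1" "pser b holomorphic_on ball 0 1"
  using powser_hol[OF PH0_facts(1)[OF assms]] powser_hol[OF PH0_facts(2)[OF assms]] by auto

lemma harm_cont:
  assumes "PH0 \<alpha> a b" shows "continuous_on (ball 0 1) (harm a b)"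
proof -
  have "continuous_on (ball 0 1) (pser a)" "continuous_on (ball 0 1) (pser b)"
    using pser_hol_ab[OF assms] holomorphic_on_imp_continuous_on by auto
  thus ?thesis unfolding harm_def by (intro continuous_intros)
qed

lemma seg_in_ball:
  fixes z1 z2 :: complex
  assumes "norm z1 < 1" "norm z2 < 1" "0 \<le> s" "s \<le> 1"
  shows "norm (z1 + of_real s * (z2 - z1)) < 1"
proof -
  have "z1 + of_real s * (z2 - z1) = of_real (1 - s) * z1 + of_real s * z2" by (simp add: algebra_simps)
  hence "norm (z1 + of_real s * (z2 - z1)) \<le> norm (of_real (1 - s) * z1) + norm (of_real s * z2)"
    using norm_triangle_ineq by metis
  moreover have "norm (of_real (1 - s) * z1) = (1 - s) * norm z1" using assms by (simp only: norm_mult norm_of_real abs_of_nonneg diff_ge_0_iff_ge)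
  moreover have "norm (of_real s * z2) = s * norm z2" using assms by (auto simp: norm_mult)
  moreover have "(1 - s) * norm z1 + s * norm z2 < 1"
  proof (cases "s = 0")
    case True thus ?thesis using assms by simp
  next
    case False
    have "(1 - s) * norm z1 \<le> (1 - s) * 1" using assms by (intro mult_left_mono) auto
    hence 1: "(1 - s) * norm z1 \<le> 1 - s" by simp
    have "s * norm z2 < s * 1" using assms False by (intro mult_strict_left_mono) auto
    hence 2: "s * norm z2 < s" by simp
    from 1 2 show ?thesis by linarith
  qed
  ultimately show ?thesis by linarith
qed



lemma harm_seg_deriv:
  assumes ph: "PH0 \<alpha> a b" and p: "norm (z1 + of_real t * u) < 1"
  shows "((\<lambda>s. Re (cnj u * harm a b (z1 + of_real s * u)))
           has_real_derivative Re (cnj u * (u * deriv (pser a) (z1 + of_real t * u) + cnj (u * deriv (pser b) (z1 + of_real t * u))))) (at t)"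
proof -
  have pb: "z1 + of_real t * u \<in> ball 0 1" using p by simp
  show ?thesis unfolding harm_def
    by (rule seg_deriv[OF holomorphic_derivI[OF pser_hol_ab(1)[OF ph] open_ball pb]
          holomorphic_derivI[OF pser_hol_ab(2)[OF ph] open_ball pb]])
qed

lemma harm_inj:
  assumes ph: "PH0 \<alpha> a b" and al: "0 \<le> \<alpha>"
  shows "inj_on (harm a b) (ball 0 1)"
proof (rule inj_onI, rule ccontr)
  fix z1 z2 assume z1: "z1 \<in> ball 0 1" and z2: "z2 \<in> ball 0 1" and eq: "harm a b z1 = harm a b z2"
    and ne: "z1 \<noteq> z2"
  define u where "u = z2 - z1"
  have u0: "0 < (norm u)^2" using ne by (simp add: u_def)
  define \<phi> where "\<phi> = (\<lambda>s. Re (cnj u * harm a b (z1 + of_real s * u)))"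
  have "\<phi> 0 < \<phi> 1"
  proof (rule DERIV_pos_imp_increasing[of 0 1])
    fix t :: real assume t: "0 \<le> t" "t \<le> 1"
    define p where "p = z1 + of_real t * u"
    have pn: "norm p < 1" unfolding p_def u_def by (rule seg_in_ball) (use z1 z2 t in auto)
    have "\<alpha> < Re (deriv (pser a) p - of_real \<alpha>) + \<alpha> - norm (deriv (pser b) p)"
      using PH0_facts(7)[OF ph] pn by force
    hence "0 < Re (deriv (pser a) p) - norm (deriv (pser b) p)" using al by simp
    hence "0 < (norm u)^2 * (Re (deriv (pser a) p) - norm (deriv (pser b) p))" using u0 by simp
    also have "\<dots> \<le> Re (cnj u * (u * deriv (pser a) p + cnj (u * deriv (pser b) p)))" by (rule seg_ineq)
    finally show "\<exists>y. (\<phi> has_real_derivative y) (at t) \<and> 0 < y"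
      using harm_seg_deriv[OF ph pn[unfolded p_def]] unfolding \<phi>_def p_def by blast
  qed simp
  moreover have "\<phi> 0 = \<phi> 1" unfolding \<phi>_def u_def using eq by simp
  ultimately show False by simp
qed

lemma mf_deriv:
  assumes "0 \<le> s" "0 \<le> r"
  shows "((\<lambda>s. r * mf \<alpha> (s * r)) has_real_derivative (r * r * (\<alpha> + (1 - \<alpha>) * ((1 - s * r)/(1 + s * r))))) (at s)"
proof -
  have pos: "0 < 1 + s * r" using assms by (simp add: add_pos_nonneg)
  have "((\<lambda>s. r * mf \<alpha> (s * r)) has_real_derivative (r * ((2*\<alpha>-1) * r + 2*(1-\<alpha>) * (r / (1 + s * r))))) (at s)"
    unfolding mf_def using pos by (auto intro!: derivative_eq_intros)
  moreover have "r * ((2*\<alpha>-1) * r + 2*(1-\<alpha>) * (r / (1 + s * r))) = r * r * (\<alpha> + (1 - \<alpha>) * ((1 - s * r)/(1 + s * r)))"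
    using pos by (simp add: field_simps)
  ultimately show ?thesis by (rule DERIV_cong)
qed

lemma harm_lower:
  assumes ph: "PH0 \<alpha> a b" and al: "\<alpha> < 1" and z: "norm z < 1"
  shows "mf \<alpha> (norm z) \<le> norm (harm a b z)"
proof (cases "z = 0")
  case True thus ?thesis by (simp add: mf_def harm_0[OF ph])
next
  case False
  define r where "r = norm z"
  have r0: "0 < r" using False by (simp add: r_def)
  define \<psi> where "\<psi> = (\<lambda>s. Re (cnj z * harm a b (0 + of_real s * z)) - r * mf \<alpha> (s * r))"
  have der: "\<exists>y. (\<psi> has_real_derivative y) (at t) \<and> 0 \<le> y" if t: "0 \<le> t" "t \<le> 1" for t
  proof -
    define p where "p = 0 + of_real t * z"
    have pn: "norm p < 1" unfolding p_def using seg_in_ball[of 0 z t] z t by simp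
    have np: "norm p = t * r" unfolding p_def r_def using t by (simp add: norm_mult)
    have d1: "((\<lambda>s. Re (cnj z * harm a b (0 + of_real s * z))) has_real_derivative
        Re (cnj z * (z * deriv (pser a) p + cnj (z * deriv (pser b) p)))) (at t)"
      using harm_seg_deriv[OF ph pn[unfolded p_def]] unfolding p_def .
    have d2: "((\<lambda>s. r * mf \<alpha> (s * r)) has_real_derivative (r * r * (\<alpha> + (1 - \<alpha>) * ((1 - t * r)/(1 + t * r))))) (at t)"
      by (rule mf_deriv) (use t r0 in auto)
    have "r * r * (\<alpha> + (1 - \<alpha>) * ((1 - t * r)/(1 + t * r))) \<le> (norm z)^2 * (Re (deriv (pser a) p) - norm (deriv (pser b) p))"
      using deriv_lower[OF ph al pn] unfolding np r_def[symmetric] using r0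
      by (simp add: power2_eq_square)
    also have "\<dots> \<le> Re (cnj z * (z * deriv (pser a) p + cnj (z * deriv (pser b) p)))" by (rule seg_ineq)
    finally show ?thesis using DERIV_diff[OF d1 d2] unfolding \<psi>_def by force
  qed
  have "\<psi> 0 \<le> \<psi> 1"
  proof (rule DERIV_nonneg_imp_increasing_open[of 0 1])
    show "\<And>x. 0 < x \<Longrightarrow> x < 1 \<Longrightarrow> \<exists>y. (\<psi> has_real_derivative y) (at x) \<and> 0 \<le> y" using der by auto
    show "continuous_on {0..1} \<psi>"
    proof (intro continuous_at_imp_continuous_on ballI)
      fix x :: real assume "x \<in> {0..1}"
      then obtain y where "(\<psi> has_real_derivative y) (at x)" using der by auto
      thus "isCont \<psi> x" by (rule DERIV_isCont)
    qed
  qed simp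
  moreover have "\<psi> 0 = 0" unfolding \<psi>_def by (simp add: harm_0[OF ph] mf_def)
  moreover have "\<psi> 1 = Re (cnj z * harm a b z) - r * mf \<alpha> r" unfolding \<psi>_def by simp
  ultimately have "r * mf \<alpha> r \<le> Re (cnj z * harm a b z)" by simp
  also have "\<dots> \<le> norm (cnj z * harm a b z)" by (rule complex_Re_le_cmod)
  also have "\<dots> = r * norm (harm a b z)" by (simp add: norm_mult r_def)
  finally show ?thesis using r0 unfolding r_def by simp
qed



lemma fa_real_sums:
  fixes y :: real assumes y: "\<bar>y\<bar> < 1"
  shows "(\<lambda>n. fa_coeff \<alpha> n * of_real y ^ n) sums of_real (y + 2*(1-\<alpha>)*(- ln (1 - y) - y))"
proof -
  define f where "f = (\<lambda>n. (if n = 0 then 0 else if n = 1 then 1 else 2 * (1 - \<alpha>) / real n) * y ^ n)"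
  have "(\<lambda>n. 2*(1-\<alpha>) * (y ^ (n + 2) / real (n + 2))) sums (2*(1-\<alpha>) * (- ln (1 - y) - y))"
    by (rule sums_mult[OF S_sums[OF y]])
  moreover have "(\<lambda>n. f (n + 2)) = (\<lambda>n. 2*(1-\<alpha>) * (y ^ (n + 2) / real (n + 2)))"
    unfolding f_def by auto
  ultimately have "(\<lambda>n. f (n + 2)) sums (2*(1-\<alpha>) * (- ln (1 - y) - y))" by simp
  hence "f sums (2*(1-\<alpha>) * (- ln (1 - y) - y) + (\<Sum>i<2. f i))" by (subst (asm) sums_iff_shift)
  moreover have "(\<Sum>i<2. f i) = y" unfolding f_def by (simp add: numeral_2_eq_2)
  ultimately have "f sums (y + 2*(1-\<alpha>)*(- ln (1 - y) - y))" by (simp add: add.commute)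
  hence "(\<lambda>n. of_real (f n) :: complex) sums of_real (y + 2*(1-\<alpha>)*(- ln (1 - y) - y))"
    by (rule sums_of_real)
  moreover have "(\<lambda>n. of_real (f n) :: complex) = (\<lambda>n. fa_coeff \<alpha> n * of_real y ^ n)"
    unfolding f_def fa_coeff_def by (auto simp: of_real_power)
  ultimately show ?thesis by simp
qed

lemma fa_neg_val:
  fixes x :: real assumes "0 \<le> x" "x < 1"
  shows "harm (fa_coeff \<alpha>) (\<lambda>_. 0) (of_real (-x)) = of_real (- mf \<alpha> x)"
proof -
  have "pser (fa_coeff \<alpha>) (of_real (-x)) = of_real (-x + 2*(1-\<alpha>)*(- ln (1 - (-x)) - (-x)))"
    unfolding pser_def using fa_real_sums[of "-x" \<alpha>] assms by (simp add: sums_iff)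
  moreover have "pser (\<lambda>_. 0) z = 0" for z unfolding pser_def by simp
  ultimately show ?thesis unfolding harm_def mf_def by (simp add: algebra_simps)
qed

lemma fa_norm_le: "norm (fa_coeff \<alpha> n * z ^ n) \<le> norm z ^ n" if "0 \<le> \<alpha>" "\<alpha> < 1"
proof -
  have "norm (fa_coeff \<alpha> n) \<le> 1"
  proof (cases "n \<le> 1")
    case True thus ?thesis unfolding fa_coeff_def by auto
  next
    case False
    hence n: "2 \<le> real n" by simp
    have "fa_coeff \<alpha> n = of_real (2 * (1 - \<alpha>) / real n)" using False unfolding fa_coeff_def by simp
    hence "norm (fa_coeff \<alpha> n) = \<bar>2 * (1 - \<alpha>) / real n\<bar>" by (simp only: norm_of_real)
    also have "\<dots> = 2 * (1 - \<alpha>) / real n" using that by simp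
    finally have "norm (fa_coeff \<alpha> n) = 2 * (1 - \<alpha>) / real n" .
    also have "\<dots> \<le> 2 * 1 / 2" using that n by (intro frac_le) auto
    finally show ?thesis by simp
  qed
  thus ?thesis by (simp add: norm_mult norm_power mult_left_le_one_le)
qed

lemma PH0_fa:
  assumes al: "0 \<le> \<alpha>" "\<alpha> < 1"
  shows "PH0 \<alpha> (fa_coeff \<alpha>) (\<lambda>_. 0)"
proof -
  have summ: "summable (\<lambda>n. fa_coeff \<alpha> n * z ^ n)" if "z \<in> ball 0 1" for z :: complex
  proof (rule summable_comparison_test')
    show "summable (\<lambda>n. norm z ^ n)" using that by (intro summable_geometric) simp
    show "norm (fa_coeff \<alpha> n * z ^ n) \<le> norm z ^ n" for n using fa_norm_le al by blast
  qed
  have H: "H0 (fa_coeff \<alpha>) (\<lambda>_. 0)" unfolding H0_def using summ by (simp add: fa_coeff_def)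
  have S: "\<forall>z\<in>ball 0 1. (\<lambda>n. fa_coeff \<alpha> n * z^n) sums pser (fa_coeff \<alpha>) z"
    using summ unfolding pser_def by (auto simp: summable_sums)
  have z0: "pser (\<lambda>_. 0) = (\<lambda>z. 0)" unfolding pser_def by auto
  have "Re (deriv (pser (fa_coeff \<alpha>)) z - of_real \<alpha>) > norm (deriv (pser (\<lambda>_. 0)) z)" if z: "z \<in> ball 0 1" for z
  proof -
    have nz: "norm z < 1" using z by simp
    have ds: "(\<lambda>n. diffs (fa_coeff \<alpha>) n * z^n) sums deriv (pser (fa_coeff \<alpha>)) z" by (rule powser_diffs_sums[OF S z])
    have k: "complex_of_nat m * complex_of_real (c / real m) = complex_of_real c" if "m > 0" for m c
    proof -
      have "complex_of_nat m * complex_of_real (c / real m) = complex_of_real (real m * (c / real m))"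
        by (simp only: of_real_mult of_real_of_nat_eq)
      thus ?thesis using that by simp
    qed
    have dfa: "diffs (fa_coeff \<alpha>) n = of_real (2*(1-\<alpha>)) + (if n = 0 then of_real (2*\<alpha> - 1) else 0)" for n
    proof (cases n)
      case 0 thus ?thesis unfolding diffs_def fa_coeff_def by (simp add: algebra_simps)
    next
      case (Suc m)
      have fs: "fa_coeff \<alpha> (Suc n) = of_real (2*(1-\<alpha>) / real (Suc n))" unfolding fa_coeff_def using Suc by simp
      have "diffs (fa_coeff \<alpha>) n = of_real (2*(1-\<alpha>))" unfolding diffs_def fs by (rule k) simp
      thus ?thesis using Suc by simp
    qed
    have "diffs (fa_coeff \<alpha>) n * z^n = of_real (2*(1-\<alpha>)) * z^n + (if n = 0 then of_real (2*\<alpha> - 1) else 0)" for n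
      unfolding dfa by (auto simp: algebra_simps)
    hence "(\<lambda>n. of_real (2*(1-\<alpha>)) * z^n + (if n = 0 then of_real (2*\<alpha> - 1) else 0)) sums deriv (pser (fa_coeff \<alpha>)) z"
      using ds by simp
    moreover have "(\<lambda>n. of_real (2*(1-\<alpha>)) * z^n + (if n = 0 then of_real (2*\<alpha> - 1) else 0)) sums
        (of_real (2*(1-\<alpha>)) * (1 / (1 - z)) + of_real (2*\<alpha> - 1))"
      by (intro sums_add sums_mult geometric_sums nz sums_single)
    ultimately have D: "deriv (pser (fa_coeff \<alpha>)) z = of_real (2*(1-\<alpha>)) * (1 / (1 - z)) + of_real (2*\<alpha> - 1)"
      using sums_unique2 by blast
    have re: "1/2 < Re (1 / (1 - z))"
    proof -
      define w where "w = 1 - z"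
      have w0: "w \<noteq> 0" using nz by (auto simp: w_def)
      have "(norm (w - 1))^2 < 1" using nz by (simp add: w_def norm_minus_commute abs_square_less_1)
      hence "(Re w - 1)^2 + (Im w)^2 < 1" by (simp add: cmod_power2)
      hence "(Re w)^2 + (Im w)^2 < 2 * Re w" by (simp add: power2_eq_square algebra_simps)
      hence "(norm w)^2 < 2 * Re w" unfolding cmod_power2 .
      moreover have "Re (1 / w) = Re w / (norm w)^2" by (simp add: Re_divide')
      moreover have "0 < (norm w)^2" using w0 by simp
      moreover have "1/2 < R / N" if "0 < N" "N < 2 * R" for N R :: real using that by (simp add: field_simps)
      ultimately show ?thesis unfolding w_def[symmetric] by simp
    qed
    have "Re (deriv (pser (fa_coeff \<alpha>)) z - of_real \<alpha>) = 2*(1-\<alpha>) * Re (1 / (1 - z)) + \<alpha> - 1"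
    proof -
      have rm: "Re (complex_of_real c * x) = c * Re x" for c x by simp
      show ?thesis unfolding D minus_complex.sel plus_complex.sel rm Re_complex_of_real by simp
    qed
    also have "\<dots> > 2*(1-\<alpha>) * (1/2) + \<alpha> - 1" using re al by simp
    finally show ?thesis unfolding z0 by (simp add: field_simps)
  qed
  thus ?thesis unfolding PH0_def using H by blast
qed



lemma mf_has_deriv: "0 \<le> s \<Longrightarrow> (mf \<alpha> has_real_derivative (\<alpha> + (1 - \<alpha>) * ((1 - s)/(1 + s)))) (at s)"
  using mf_deriv[of s 1 \<alpha>] by simp

lemma mf_mono:
  assumes al: "0 \<le> \<alpha>" "\<alpha> < 1" and xy: "0 \<le> x" "x \<le> y" "y \<le> 1"
  shows "mf \<alpha> x \<le> mf \<alpha> y"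
proof (rule DERIV_nonneg_imp_increasing_open[OF xy(2)])
  fix s assume s: "x < s" "s < y"
  have "0 \<le> (1 - \<alpha>) * ((1 - s)/(1 + s))" using al s xy by (intro mult_nonneg_nonneg divide_nonneg_pos) auto
  thus "\<exists>d. (mf \<alpha> has_real_derivative d) (at s) \<and> 0 \<le> d"
    using mf_has_deriv[of s \<alpha>] s xy al by (intro exI[of _ "\<alpha> + (1 - \<alpha>) * ((1 - s)/(1 + s))"]) auto
next
  show "continuous_on {x..y} (mf \<alpha>)"
  proof (intro continuous_at_imp_continuous_on ballI)
    fix s assume "s \<in> {x..y}"
    hence "0 \<le> s" using xy by auto
    thus "isCont (mf \<alpha>) s" using mf_has_deriv DERIV_isCont by blast
  qed
qed

lemma mf_1: "mf \<alpha> 1 = Lc \<alpha>" unfolding mf_def Lc_def by simp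

lemma mf_tendsto: "(mf \<alpha> \<longlongrightarrow> Lc \<alpha>) (at_left 1)"
proof -
  have "isCont (mf \<alpha>) 1" using mf_has_deriv[of 1 \<alpha>] DERIV_isCont by simp
  hence "(mf \<alpha> \<longlongrightarrow> mf \<alpha> 1) (at 1)" by (simp add: isCont_def)
  hence "(mf \<alpha> \<longlongrightarrow> mf \<alpha> 1) (at_left 1)" by (rule tendsto_mono[OF at_within_le_at])
  thus ?thesis by (simp add: mf_1)
qed

lemma bdist_lower:
  assumes ph: "PH0 \<alpha> a b" and al: "0 \<le> \<alpha>" "\<alpha> < 1"
  shows "ereal (Lc \<alpha>) \<le> bdist (harm a b)"
proof -
  define F where "F = harm a b"
  define U where "U = F ` ball 0 1"
  have cont: "continuous_on (ball 0 1) F" unfolding F_def by (rule harm_cont[OF ph])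
  have opn: "open U" unfolding U_def by (rule invariance_of_domain[OF cont open_ball]) (unfold F_def, rule harm_inj[OF ph al(1)])
  have F0: "F 0 = 0" unfolding F_def by (rule harm_0[OF ph])
  have key: "Lc \<alpha> \<le> norm w" if w: "w \<in> frontier U" for w
  proof (rule ccontr)
    assume "\<not> Lc \<alpha> \<le> norm w"
    hence lt: "norm w < Lc \<alpha>" by simp
    have wcl: "w \<in> closure U" and wnU: "w \<notin> U" using w opn by (auto simp: frontier_def interior_open)
    have "eventually (\<lambda>r. norm w < mf \<alpha> r) (at_left 1)" by (rule order_tendstoD(1)[OF mf_tendsto lt])
    moreover have "eventually (\<lambda>r. r \<in> {0<..<(1::real)}) (at_left 1)" by (rule eventually_at_left_real) simp
    ultimately have "eventually (\<lambda>r. norm w < mf \<alpha> r \<and> r \<in> {0<..<(1::real)}) (at_left 1)"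
      by (rule eventually_conj)
    then obtain r where r: "norm w < mf \<alpha> r" "0 < r" "r < 1"
      using eventually_happens'[OF trivial_limit_at_left_real] by force
    have "w \<in> closure (F ` cball 0 r)"
    proof (unfold closure_approachable, intro allI impI)
      fix e :: real assume e: "0 < e"
      define e' where "e' = min e (mf \<alpha> r - norm w)"
      have e': "0 < e'" using e r by (simp add: e'_def)
      obtain y where y: "y \<in> U" "dist y w < e'" using wcl e' unfolding closure_approachable by blast
      then obtain z where z: "z \<in> ball 0 1" "y = F z" unfolding U_def by blast
      have "norm z \<le> r"
      proof (rule ccontr)
        assume "\<not> norm z \<le> r"
        hence "mf \<alpha> r \<le> mf \<alpha> (norm z)" using z r al by (intro mf_mono) auto
        also have "\<dots> \<le> norm (F z)" unfolding F_def by (rule harm_lower[OF ph al(2)]) (use z in simp)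
        finally have "mf \<alpha> r - norm w \<le> dist y w"
          using z(2) norm_triangle_ineq2[of y w] by (simp add: dist_norm)
        thus False using y(2) by (simp add: e'_def)
      qed
      hence "y \<in> F ` cball 0 r" using z by auto
      thus "\<exists>y\<in>F ` cball 0 r. dist y w < e" using y(2) by (auto simp: e'_def)
    qed
    moreover have "compact (F ` cball 0 r)"
      by (rule compact_continuous_image[OF continuous_on_subset[OF cont]]) (use r in auto)
    ultimately have "w \<in> F ` cball 0 r" by (simp add: compact_imp_closed)
    hence "w \<in> U" unfolding U_def using r by auto
    thus False using wnU by simp
  qed
  show ?thesis unfolding bdist_def F_def[symmetric] U_def[symmetric] F0
    by (rule INF_greatest) (use key in simp)
qed



lemma bohr_le:
  assumes ph: "PH0 \<alpha> a b" and al: "0 \<le> \<alpha>" "\<alpha> < 1" and r: "0 \<le> r" "r < 1"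
  shows "bohr_sum a b r \<le> Bf \<alpha> r"
proof -
  define g where "g = (\<lambda>n::nat. 2*(1-\<alpha>) * (r ^ (n + 2) / real (n + 2)))"
  have gs: "summable g" unfolding g_def by (intro summable_mult sums_summable[OF S_sums]) (use r in auto)
  have le: "(norm (a (n + 2)) + norm (b (n + 2))) * r ^ (n + 2) \<le> g n" for n
  proof -
    have "norm (a (n + 2)) + norm (b (n + 2)) \<le> 2 * (1 - \<alpha>) / real (n + 2)"
      by (rule coef_bound[OF ph al(2)]) simp
    hence "(norm (a (n + 2)) + norm (b (n + 2))) * r ^ (n + 2) \<le> 2 * (1 - \<alpha>) / real (n + 2) * r ^ (n + 2)"
      using r by (intro mult_right_mono) auto
    thus ?thesis unfolding g_def by simp
  qed
  have fs: "summable (\<lambda>n. (norm (a (n + 2)) + norm (b (n + 2))) * r ^ (n + 2))"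
    by (rule summable_comparison_test[OF _ gs]) (use le r in auto)
  have "suminf (\<lambda>n. (norm (a (n + 2)) + norm (b (n + 2))) * r ^ (n + 2)) \<le> suminf g"
    by (rule suminf_le[OF le fs gs])
  also have "suminf g = 2*(1-\<alpha>) * suminf (\<lambda>n. r ^ (n + 2) / real (n + 2))"
    unfolding g_def by (rule suminf_mult) (rule sums_summable[OF S_sums], use r in auto)
  finally show ?thesis unfolding bohr_sum_def using Bf_series[OF r, of \<alpha>] by simp
qed

lemma bohr_fa:
  assumes al: "0 \<le> \<alpha>" "\<alpha> < 1" and r: "0 \<le> r" "r < 1"
  shows "bohr_sum (fa_coeff \<alpha>) (\<lambda>_. 0) r = Bf \<alpha> r"
proof -
  have "(norm (fa_coeff \<alpha> (n + 2)) + norm (0::complex)) * r ^ (n + 2) = 2*(1-\<alpha>) * (r ^ (n + 2) / real (n + 2))" for n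
  proof -
    have "fa_coeff \<alpha> (n + 2) = of_real (2*(1-\<alpha>) / real (n + 2))" unfolding fa_coeff_def by simp
    hence "norm (fa_coeff \<alpha> (n + 2)) = \<bar>2*(1-\<alpha>) / real (n + 2)\<bar>" by (simp only: norm_of_real)
    also have "\<dots> = 2*(1-\<alpha>) / real (n + 2)" using al by simp
    finally show ?thesis by simp
  qed
  hence "bohr_sum (fa_coeff \<alpha>) (\<lambda>_. 0) r = r + suminf (\<lambda>n. 2*(1-\<alpha>) * (r ^ (n + 2) / real (n + 2)))"
    unfolding bohr_sum_def by (simp only:)
  also have "suminf (\<lambda>n. 2*(1-\<alpha>) * (r ^ (n + 2) / real (n + 2))) = 2*(1-\<alpha>) * suminf (\<lambda>n. r ^ (n + 2) / real (n + 2))"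
    by (rule suminf_mult) (rule sums_summable[OF S_sums], use r in auto)
  finally show ?thesis using Bf_series[OF r, of \<alpha>] by simp
qed



lemma bdist_fa_upper:
  assumes al: "0 \<le> \<alpha>" "\<alpha> < 1"
  shows "bdist (harm (fa_coeff \<alpha>) (\<lambda>_. 0)) \<le> ereal (Lc \<alpha>)"
proof -
  have ph: "PH0 \<alpha> (fa_coeff \<alpha>) (\<lambda>_. 0)" by (rule PH0_fa[OF al])
  define F where "F = harm (fa_coeff \<alpha>) (\<lambda>_. 0)"
  define U where "U = F ` ball 0 1"
  have cont: "continuous_on (ball 0 1) F" unfolding F_def by (rule harm_cont[OF ph])
  have inj: "inj_on F (ball 0 1)" unfolding F_def by (rule harm_inj[OF ph al(1)])
  have opn: "open U" unfolding U_def by (rule invariance_of_domain[OF cont open_ball inj])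
  have F0: "F 0 = 0" unfolding F_def by (rule harm_0[OF ph])
  define x where "x = (\<lambda>k::nat. 1 - 1 / (real k + 2))"
  have x01: "0 \<le> x k \<and> x k < 1" for k
  proof -
    have p: "0 < real k + 2" by simp
    have "1 / (real k + 2) \<le> 1" using p by simp
    moreover have "0 < 1 / (real k + 2)" using p by simp
    ultimately show ?thesis unfolding x_def by simp
  qed
  have xlim: "x \<longlonglongrightarrow> 1"
  proof -
    have "(\<lambda>k. inverse (real (Suc (Suc k)))) \<longlonglongrightarrow> 0"
      using LIMSEQ_Suc[OF LIMSEQ_inverse_real_of_nat] .
    moreover have "(\<lambda>k. inverse (real (Suc (Suc k)))) = (\<lambda>k. 1 / (real k + 2))"
      by (simp add: inverse_eq_divide add.commute)
    ultimately have "(\<lambda>k. 1 / (real k + 2)) \<longlonglongrightarrow> 0" by simp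
    hence "(\<lambda>k. 1 - 1 / (real k + 2)) \<longlonglongrightarrow> 1 - 0" by (intro tendsto_diff tendsto_const)
    thus ?thesis unfolding x_def by simp
  qed
  have seqin: "of_real (- x k) \<in> ball (0::complex) 1" for k using x01[of k] by (simp add: norm_minus_cancel)
  have Fx: "F (of_real (- x k)) = of_real (- mf \<alpha> (x k))" for k
    unfolding F_def by (rule fa_neg_val) (use x01 in blast)+
  have "isCont (mf \<alpha>) 1" using mf_has_deriv[of 1 \<alpha>] DERIV_isCont by simp
  hence "(\<lambda>k. mf \<alpha> (x k)) \<longlonglongrightarrow> mf \<alpha> 1" by (rule isCont_tendsto_compose[OF _ xlim])
  hence "(\<lambda>k. of_real (- mf \<alpha> (x k)) :: complex) \<longlonglongrightarrow> of_real (- Lc \<alpha>)"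
    unfolding mf_1 by (intro tendsto_of_real tendsto_minus)
  hence Flim: "(\<lambda>k. F (of_real (- x k))) \<longlonglongrightarrow> of_real (- Lc \<alpha>)" unfolding Fx .
  have seqU: "\<forall>k. F (of_real (- x k)) \<in> U" using seqin unfolding U_def by blast
  have incl: "of_real (- Lc \<alpha>) \<in> closure U"
    unfolding closure_sequential by (rule exI[of _ "\<lambda>k. F (of_real (- x k))"]) (use seqU Flim in blast)
  have notin: "of_real (- Lc \<alpha>) \<notin> U"
  proof
    assume "of_real (- Lc \<alpha>) \<in> U"
    then obtain z0 where z0: "z0 \<in> ball 0 1" "F z0 = of_real (- Lc \<alpha>)" unfolding U_def by (metis imageE)
    obtain g where hom: "homeomorphism (ball 0 1) (F ` ball 0 1) F g"
      by (rule invariance_of_domain_homeomorphism[OF open_ball cont _ inj]) simp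
    have gc: "continuous_on U g" and gF: "\<And>z. z \<in> ball 0 1 \<Longrightarrow> g (F z) = z"
      using hom unfolding homeomorphism_def U_def by auto
    have "(g \<circ> (\<lambda>k. F (of_real (- x k)))) \<longlonglongrightarrow> g (of_real (- Lc \<alpha>))"
      using gc[unfolded continuous_on_sequentially, rule_format, of "of_real (- Lc \<alpha>)" "\<lambda>k. F (of_real (- x k))"]
        seqU Flim \<open>of_real (- Lc \<alpha>) \<in> U\<close> by blast
    hence "(\<lambda>k. of_real (- x k) :: complex) \<longlonglongrightarrow> z0"
      using gF[OF seqin] gF[OF z0(1)] z0(2) by (simp add: o_def)
    moreover have "(\<lambda>k. of_real (- x k) :: complex) \<longlonglongrightarrow> of_real (- 1)"
      by (intro tendsto_of_real tendsto_minus xlim)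
    ultimately have "z0 = of_real (- 1)" by (rule LIMSEQ_unique)
    thus False using z0(1) by simp
  qed
  have fr: "of_real (- Lc \<alpha>) \<in> frontier U" using incl notin opn by (simp add: frontier_def interior_open)
  have "bdist F \<le> ereal (norm (of_real (- Lc \<alpha>) - F 0))"
    unfolding bdist_def U_def[symmetric] by (rule INF_lower[OF fr])
  also have "norm (of_real (- Lc \<alpha>) - F 0 :: complex) = Lc \<alpha>" using Lc_pos[OF al] F0 by simp
  finally show ?thesis unfolding F_def .
qed




theorem theorem2p2:
  fixes \<alpha> :: real and a b :: "nat \<Rightarrow> complex"
  assumes "0 \<le> \<alpha>" "\<alpha> < 1" and "PH0 \<alpha> a b"
  shows "(\<exists>!r. 0 < r \<and> r < 1 \<and> rf_eq \<alpha> r)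
    \<and> (\<forall>z::complex. norm z \<le> rf \<alpha> \<longrightarrow> ereal (bohr_sum a b (norm z)) \<le> bdist (harm a b))
    \<and> PH0 \<alpha> (fa_coeff \<alpha>) (\<lambda>_. 0)
    \<and> (\<forall>z::complex. norm z = rf \<alpha> \<longrightarrow>
          ereal (bohr_sum (fa_coeff \<alpha>) (\<lambda>_. 0) (norm z)) = bdist (harm (fa_coeff \<alpha>) (\<lambda>_. 0)))
    \<and> (\<forall>z::complex. rf \<alpha> < norm z \<and> norm z < 1 \<longrightarrow>
          \<not> ereal (bohr_sum (fa_coeff \<alpha>) (\<lambda>_. 0) (norm z)) \<le> bdist (harm (fa_coeff \<alpha>) (\<lambda>_. 0)))"
proof -
  note al = assms(1,2)
  note rp = rf_props[OF al]
  have phf: "PH0 \<alpha> (fa_coeff \<alpha>) (\<lambda>_. 0)" by (rule PH0_fa[OF al])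
  have bfa: "bdist (harm (fa_coeff \<alpha>) (\<lambda>_. 0)) = ereal (Lc \<alpha>)"
    using bdist_fa_upper[OF al] bdist_lower[OF phf al] by simp
  have P2: "ereal (bohr_sum a b (norm z)) \<le> bdist (harm a b)" if z: "norm z \<le> rf \<alpha>" for z :: complex
  proof -
    have "bohr_sum a b (norm z) \<le> Bf \<alpha> (norm z)" by (rule bohr_le[OF assms(3) al]) (use z rp in auto)
    also have "Bf \<alpha> (norm z) \<le> Bf \<alpha> (rf \<alpha>)"
      using Bf_strict_mono[of \<alpha> "norm z" "rf \<alpha>"] z rp al by (cases "norm z = rf \<alpha>") auto
    also have "\<dots> = Lc \<alpha>" by (rule rp(3))
    finally have "ereal (bohr_sum a b (norm z)) \<le> ereal (Lc \<alpha>)" by simp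
    also have "\<dots> \<le> bdist (harm a b)" by (rule bdist_lower[OF assms(3) al])
    finally show ?thesis .
  qed
  have P4: "ereal (bohr_sum (fa_coeff \<alpha>) (\<lambda>_. 0) (norm z)) = bdist (harm (fa_coeff \<alpha>) (\<lambda>_. 0))"
    if z: "norm z = rf \<alpha>" for z :: complex
    using bohr_fa[OF al, of "rf \<alpha>"] rp z bfa by simp
  have P5: "\<not> ereal (bohr_sum (fa_coeff \<alpha>) (\<lambda>_. 0) (norm z)) \<le> bdist (harm (fa_coeff \<alpha>) (\<lambda>_. 0))"
    if z: "rf \<alpha> < norm z \<and> norm z < 1" for z :: complex
  proof -
    have "Lc \<alpha> < Bf \<alpha> (norm z)" using Bf_strict_mono[of \<alpha> "rf \<alpha>" "norm z"] z rp al by simp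
    thus ?thesis using bohr_fa[OF al, of "norm z"] z rp bfa by simp
  qed
  show ?thesis using root_ex1[OF al] P2 phf P4 P5 by blast
qed

end
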